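(* Let $\tau$ be a topology on $\mathbb{R}$ such that $\tau_e\subset\tau$ and every nonempty $\tau$-open set has the Baire property and is non-meager (with respect to the Euclidean topology). For any function $f\colon\mathbb{R}\to\mathbb{R}$, if $\mathrm{C}_\tau(f)$ is dense in $\mathbb{R}$, then $\mathrm{C}_\tau(f)$ is residual.
   Context: $\tau_e$ is the Euclidean topology. $\mathrm{C}_\tau(f)$ is the set of points at which $f\colon(\mathbb{R},\tau)\to(\mathbb{R},\tau_e)$ is continuous. A set is residual if its complement is meager (in the Euclidean topology). *)

theory Defs
  imports "HOL-Analysis.Analysis"
begin

definition nowhere_dense :: "real set \<Rightarrow> bool" where
  "nowhere_dense A \<longleftrightarrow> interior (closure A) = {}"

definition meager :: "real set \<Rightarrow> bool" where
  "meager A \<longleftrightarrow> (\<exists>N :: nat \<Rightarrow> real set. (\<forall>n. nowhere_dense (N n)) \<and> A \<subseteq> (\<Union>n. N n))"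

definition residual :: "real set \<Rightarrow> bool" where
  "residual A \<longleftrightarrow> meager (UNIV - A)"

definition baire_property :: "real set \<Rightarrow> bool" where
  "baire_property A \<longleftrightarrow> (\<exists>G M. open G \<and> meager M \<and> A = (G - M) \<union> (M - G))"

definition cont_points :: "real topology \<Rightarrow> (real \<Rightarrow> real) \<Rightarrow> real set" where
  "cont_points T f = {x. \<forall>e>0. \<exists>U. openin T U \<and> x \<in> U \<and> (\<forall>y\<in>U. \<bar>f y - f x\<bar> < e)}"

end

theory Submission
  imports Defs
begin

lemma meager_mono: "meager B \<Longrightarrow> A \<subseteq> B \<Longrightarrow> meager A"
  unfolding meager_def by blast

lemma nd_meager: "nowhere_dense A \<Longrightarrow> meager A"
  unfolding meager_def by (rule exI[of _ "\<lambda>_. A"]) auto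

lemma meager_UN:
  assumes "\<And>n::nat. meager (A n)"
  shows "meager (\<Union>n. A n)"
proof -
  have "\<forall>n. \<exists>N::nat \<Rightarrow> real set. (\<forall>k. nowhere_dense (N k)) \<and> A n \<subseteq> (\<Union>k. N k)"
  proof
    fix n show "\<exists>N::nat \<Rightarrow> real set. (\<forall>k. nowhere_dense (N k)) \<and> A n \<subseteq> (\<Union>k. N k)"
      using assms[of n] unfolding meager_def .
  qed
  from choice[OF this] obtain N :: "nat \<Rightarrow> nat \<Rightarrow> real set" where N0: "\<forall>n. (\<forall>k. nowhere_dense (N n k)) \<and> A n \<subseteq> (\<Union>k. N n k)"
    by blast
  have N1: "\<And>n k. nowhere_dense (N n k)" using N0 by blast
  have N2: "\<And>n. A n \<subseteq> (\<Union>k. N n k)" using N0 by blast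
  define N' where "N' m = (case prod_decode m of (n,k) \<Rightarrow> N n k)" for m
  have "\<forall>m. nowhere_dense (N' m)"
  proof
    fix m obtain n k where "prod_decode m = (n,k)" by (cases "prod_decode m")
    then show "nowhere_dense (N' m)" by (simp add: N'_def N1)
  qed
  moreover have "(\<Union>n. A n) \<subseteq> (\<Union>m. N' m)"
  proof
    fix x assume "x \<in> (\<Union>n. A n)"
    then obtain n where "x \<in> A n" by (rule UN_E)
    then have "x \<in> (\<Union>k. N n k)" using N2[of n] by blast
    then obtain k where "x \<in> N n k" by (rule UN_E)
    then have "x \<in> N' (prod_encode (n,k))" unfolding N'_def by simp
    then show "x \<in> (\<Union>m. N' m)" by blast
  qed
  ultimately show ?thesis unfolding meager_def by (intro exI[of _ N'] conjI)
qed

lemma meager_Un: "meager A \<Longrightarrow> meager B \<Longrightarrow> meager (A \<union> B)"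
proof -
  assume a: "meager A" "meager B"
  have m: "meager (if n = (0::nat) then A else B)" for n using a by simp
  have "meager (\<Union>n. if n = (0::nat) then A else B)"
    by (rule meager_UN[OF m])
  moreover have "A \<union> B \<subseteq> (\<Union>n. if n = (0::nat) then A else B)"
  proof
    fix x assume "x \<in> A \<union> B"
    then show "x \<in> (\<Union>n. if n = (0::nat) then A else B)"
    proof
      assume "x \<in> A" then show ?thesis by (intro UN_I[of 0]) auto
    next
      assume "x \<in> B" then show ?thesis by (intro UN_I[of 1]) auto
    qed
  qed
  ultimately show ?thesis by (rule meager_mono)
qed

theorem mainTheorem14:
  fixes T :: "real topology" and f :: "real \<Rightarrow> real"
  assumes "topspace T = UNIV"
    and "\<And>U. open U \<Longrightarrow> openin T U"
    and "\<And>U. openin T U \<Longrightarrow> U \<noteq> {} \<Longrightarrow> baire_property U \<and> \<not> meager U"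
    and "closure (cont_points T f) = UNIV"
  shows "residual (cont_points T f)"
proof -
  let ?C = "cont_points T f"
  have dense_meager: "meager (UNIV - W)" if W: "openin T W" "closure W = UNIV" for W
  proof (cases "W = {}")
    case True then show ?thesis using W(2) by simp
  next
    case False
    then obtain G M where GM: "open G" "meager M" "W = (G - M) \<union> (M - G)"
      using assms(3)[OF W(1)] unfolding baire_property_def by blast
    have "nowhere_dense (UNIV - G)"
      unfolding nowhere_dense_def
    proof (rule ccontr)
      assume "interior (closure (UNIV - G)) \<noteq> {}"
      moreover have "closure (UNIV - G) = UNIV - G"
        using GM(1) by (simp add: closed_Diff)
      ultimately have ne: "interior (UNIV - G) \<noteq> {}" by simp
      let ?V = "interior (UNIV - G)"
      have "?V \<inter> closure W \<noteq> {}" using W(2) ne by simp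
      then have ne2: "?V \<inter> W \<noteq> {}" using open_Int_closure_eq_empty[of ?V W] by simp
      have "openin T (?V \<inter> W)" using assms(2)[of ?V] W(1) by (simp add: openin_Int)
      moreover have "?V \<inter> W \<subseteq> M" using GM(3) interior_subset[of "UNIV - G"] by blast
      ultimately have "openin T (?V \<inter> W)" "meager (?V \<inter> W)" using meager_mono[OF GM(2)] by auto
      then show False using assms(3) ne2 by blast
    qed
    then have "meager ((UNIV - G) \<union> M)" by (intro meager_Un nd_meager GM(2))
    moreover have "UNIV - W \<subseteq> (UNIV - G) \<union> M" using GM(3) by blast
    ultimately show ?thesis by (rule meager_mono)
  qed
  define Gn where "Gn n = {x. \<exists>U. openin T U \<and> x \<in> U \<and> (\<forall>y\<in>U. \<forall>z\<in>U. \<bar>f y - f z\<bar> < 1 / (real n + 1))}" for n :: nat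
  have open_Gn: "openin T (Gn n)" for n
  proof (subst openin_subopen, intro ballI)
    fix x assume "x \<in> Gn n"
    then obtain U where U: "openin T U" "x \<in> U" "\<forall>y\<in>U. \<forall>z\<in>U. \<bar>f y - f z\<bar> < 1 / (real n + 1)"
      unfolding Gn_def by blast
    then have "U \<subseteq> Gn n" unfolding Gn_def by blast
    then show "\<exists>U. openin T U \<and> x \<in> U \<and> U \<subseteq> Gn n" using U by blast
  qed
  have C_sub: "?C \<subseteq> Gn n" for n
  proof
    fix x assume "x \<in> ?C"
    then obtain U where U: "openin T U" "x \<in> U" "\<forall>y\<in>U. \<bar>f y - f x\<bar> < 1 / (2 * (real n + 1))"
    proof -
      have "1 / (2 * (real n + 1)) > 0" by simp
      then show ?thesis using \<open>x \<in> ?C\<close> that unfolding cont_points_def by blast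
    qed
    have "\<forall>y\<in>U. \<forall>z\<in>U. \<bar>f y - f z\<bar> < 1 / (real n + 1)"
    proof (intro ballI)
      fix y z assume "y \<in> U" "z \<in> U"
      then have "\<bar>f y - f x\<bar> < 1 / (2 * (real n + 1))" "\<bar>f z - f x\<bar> < 1 / (2 * (real n + 1))" using U by auto
      moreover have "1 / (2 * (real n + 1)) + 1 / (2 * (real n + 1)) = 1 / (real n + 1)"
        by (simp add: field_simps)
      ultimately show "\<bar>f y - f z\<bar> < 1 / (real n + 1)" by (smt (verit))
    qed
    then show "x \<in> Gn n" unfolding Gn_def using U by blast
  qed
  have dense_Gn: "closure (Gn n) = UNIV" for n
    using closure_mono[OF C_sub[of n]] assms(4) by auto
  have "(\<Inter>n. Gn n) \<subseteq> ?C"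
  proof
    fix x assume x: "x \<in> (\<Inter>n. Gn n)"
    show "x \<in> ?C" unfolding cont_points_def
    proof (intro CollectI allI impI)
      fix e :: real assume "e > 0"
      then obtain n :: nat where n: "1 / (real n + 1) < e"
      proof -
        obtain n where "inverse (real (Suc n)) < e" using reals_Archimedean \<open>e > 0\<close> by blast
        moreover have "inverse (real (Suc n)) = 1 / (real n + 1)" by (simp add: inverse_eq_divide)
        ultimately show ?thesis using that[of n] by simp
      qed
      from x have "x \<in> Gn n" by blast
      then obtain U where U: "openin T U" "x \<in> U" "\<forall>y\<in>U. \<forall>z\<in>U. \<bar>f y - f z\<bar> < 1 / (real n + 1)"
        unfolding Gn_def by blast
      then show "\<exists>U. openin T U \<and> x \<in> U \<and> (\<forall>y\<in>U. \<bar>f y - f x\<bar> < e)"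
        using n by (meson less_trans)
    qed
  qed
  then have sub: "UNIV - ?C \<subseteq> (\<Union>n. UNIV - Gn n)" by blast
  have mg: "meager (\<Union>n. UNIV - Gn n)"
    by (rule meager_UN, rule dense_meager[OF open_Gn dense_Gn])
  show ?thesis unfolding residual_def by (rule meager_mono[OF mg sub])
qed

end
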